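(* There is no binary self-orthogonal $[94,7,46]$ code.
   Context: A binary linear code $C$ is self-orthogonal if $C\subseteq C^\perp$. *)

theory Defs
  imports Main "HOL-Library.Z2"
begin

definition bin_vectors :: "nat \<Rightarrow> (nat \<Rightarrow> bit) set" where
  "bin_vectors n = {v. \<forall>i\<ge>n. v i = 0}"

definition bin_linear_code :: "nat \<Rightarrow> (nat \<Rightarrow> bit) set \<Rightarrow> bool" where
  "bin_linear_code n C \<longleftrightarrow> C \<subseteq> bin_vectors n \<and> (\<lambda>i. 0) \<in> C
     \<and> (\<forall>x\<in>C. \<forall>y\<in>C. (\<lambda>i. x i + y i) \<in> C)
     \<and> (\<forall>c::bit. \<forall>x\<in>C. (\<lambda>i. c * x i) \<in> C)"

definition lin_comb :: "(nat \<Rightarrow> bit) set \<Rightarrow> ((nat \<Rightarrow> bit) \<Rightarrow> bit) \<Rightarrow> nat \<Rightarrow> bit" where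
  "lin_comb B a = (\<lambda>i. \<Sum>b\<in>B. a b * b i)"

definition code_dim :: "(nat \<Rightarrow> bit) set \<Rightarrow> nat \<Rightarrow> bool" where
  "code_dim C k \<longleftrightarrow> (\<exists>B. finite B \<and> B \<subseteq> C \<and> card B = k
     \<and> (\<forall>a. lin_comb B a = (\<lambda>i. 0) \<longrightarrow> (\<forall>b\<in>B. a b = 0))
     \<and> C = {lin_comb B a | a. True})"

definition hamming_dist :: "nat \<Rightarrow> (nat \<Rightarrow> bit) \<Rightarrow> (nat \<Rightarrow> bit) \<Rightarrow> nat" where
  "hamming_dist n x y = card {i. i < n \<and> x i \<noteq> y i}"

definition min_dist :: "nat \<Rightarrow> (nat \<Rightarrow> bit) set \<Rightarrow> nat" where
  "min_dist n C = Min {hamming_dist n x y | x y. x \<in> C \<and> y \<in> C \<and> x \<noteq> y}"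

definition self_orthogonal :: "nat \<Rightarrow> (nat \<Rightarrow> bit) set \<Rightarrow> bool" where
  "self_orthogonal n C \<longleftrightarrow> (\<forall>x\<in>C. \<forall>y\<in>C. (\<Sum>i<n. x i * y i) = 0)"

end

theory Submission
  imports Defs "HOL-Library.FuncSet"
begin

lemma bit_cases: "(b::bit) = 0 \<or> b = 1" by (cases "b = 0") auto

lemma of_nat_bit: "((of_nat m)::bit) = 0 \<longleftrightarrow> even m"
  by (induction m) auto

lemma sum_bits: "finite A \<Longrightarrow> (\<Sum>i\<in>A. (x i::bit)) = of_nat (card {i\<in>A. x i = 1})"
proof (induction A rule: finite_induct)
  case empty then show ?case by simp
next
  case (insert a A)
  have "{i\<in>insert a A. x i = 1} = (if x a = 1 then insert a {i\<in>A. x i = 1} else {i\<in>A. x i = 1})" by auto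
  then show ?case using insert by auto
qed

lemma UNIV_bit: "(UNIV::bit set) = {0,1}" using bit_cases by auto
lemma card_bit: "card (UNIV::bit set) = 2" unfolding UNIV_bit by simp

definition wt :: "(nat \<Rightarrow> bit) \<Rightarrow> nat" where
  "wt x = card {i. i < 94 \<and> x i = 1}"

definition vadd :: "(nat \<Rightarrow> bit) \<Rightarrow> (nat \<Rightarrow> bit) \<Rightarrow> nat \<Rightarrow> bit" where
  "vadd x y = (\<lambda>i. x i + y i)"

lemma bit_add_self: "(a::bit) + a = 0" by (cases "a = 0") auto
lemma bit_add_eq0: "(a::bit) + b = 0 \<longleftrightarrow> a = b"
  using bit_cases[of a] bit_cases[of b] by auto

lemma vadd_vadd: "vadd (vadd x y) y = x"
proof (rule ext)
  fix i
  show "vadd (vadd x y) y i = x i"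
    unfolding vadd_def by (simp only: add.assoc bit_add_self add_0_right)
qed

lemma hd_wt: "hamming_dist 94 x y = wt (vadd x y)"
proof -
  have "{i. i < 94 \<and> x i \<noteq> y i} = {i. i < 94 \<and> vadd x y i = 1}"
  proof -
    have "x i \<noteq> y i \<longleftrightarrow> vadd x y i = 1" for i
      unfolding vadd_def using bit_cases[of "x i"] bit_cases[of "y i"] by auto
    then show ?thesis by simp
  qed
  then show ?thesis unfolding hamming_dist_def wt_def by simp
qed

lemma wt_inter:
  "wt (vadd x y) + 2 * card {i. i < 94 \<and> x i = 1 \<and> y i = 1} = wt x + wt y"
proof -
  let ?X = "{i. i < 94 \<and> x i = 1}" and ?Y = "{i. i < 94 \<and> y i = 1}"
  have fX: "finite ?X" "finite ?Y" by auto
  have I: "{i. i < 94 \<and> x i = 1 \<and> y i = 1} = ?X \<inter> ?Y" by auto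
  have V: "{i. i < 94 \<and> vadd x y i = 1} = (?X \<union> ?Y) - (?X \<inter> ?Y)"
    unfolding vadd_def using bit_cases by auto
  have "card ((?X \<union> ?Y) - (?X \<inter> ?Y)) = card (?X \<union> ?Y) - card (?X \<inter> ?Y)"
    by (rule card_Diff_subset) (use fX in auto)
  moreover have "card ?X + card ?Y = card (?X \<union> ?Y) + card (?X \<inter> ?Y)"
    by (rule card_Un_Int) (use fX in auto)
  moreover have "card (?X \<inter> ?Y) \<le> card (?X \<union> ?Y)"
    by (rule card_mono) (use fX in auto)
  ultimately show ?thesis unfolding wt_def I V by linarith
qed

lemma so_even:
  assumes "(\<Sum>i<(94::nat). x i * y i) = (0::bit)"
  shows "even (card {i. i < 94 \<and> x i = 1 \<and> y i = 1})"
proof -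
  have "{i\<in>{..<(94::nat)}. x i * y i = 1} = {i. i < 94 \<and> x i = 1 \<and> y i = 1}"
    using bit_cases by auto
  moreover have "(\<Sum>i<(94::nat). x i * y i) = of_nat (card {i\<in>{..<(94::nat)}. x i * y i = 1})"
    by (rule sum_bits) simp
  ultimately show ?thesis using assms of_nat_bit by metis
qed

lemma mod4_aux: "(a::nat) + 4*k = b \<Longrightarrow> a mod 4 = b mod 4" by presburger
lemma mod4_aux2: "even (a::nat) \<Longrightarrow> \<not> 4 dvd a \<Longrightarrow> a mod 4 = 2" by presburger
lemma mod4_aux3: "(a::nat) \<ge> 46 \<Longrightarrow> 4 dvd a \<Longrightarrow> 48 \<le> a" by presburger
lemma mod4_aux4: "(a::nat) mod 4 = 2 \<Longrightarrow> b mod 4 = (a + 46) mod 4 \<Longrightarrow> 4 dvd b" by presburger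
lemma mod4_aux5: "(a::nat) mod 4 = 0 \<Longrightarrow> b mod 4 = (a + 46) mod 4 \<Longrightarrow> \<not> 4 dvd b" by presburger
lemma mod4_aux6: "4 dvd (a::nat) \<Longrightarrow> 4 dvd b \<Longrightarrow> c mod 4 = (a + b) mod 4 \<Longrightarrow> 4 dvd c" by presburger

theorem proposition6p9:
  shows "\<not> (\<exists>C. bin_linear_code 94 C \<and> code_dim C 7 \<and> min_dist 94 C = 46
                \<and> self_orthogonal 94 C)"
proof
  assume "\<exists>C. bin_linear_code 94 C \<and> code_dim C 7 \<and> min_dist 94 C = 46
                \<and> self_orthogonal 94 C"
  then obtain C where lin: "bin_linear_code 94 C" and dim: "code_dim C 7"
    and md: "min_dist 94 C = 46" and so: "self_orthogonal 94 C" by blast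
  from dim obtain B where fB: "finite B" and cB: "card B = 7"
    and ind: "\<forall>a. lin_comb B a = (\<lambda>i. 0) \<longrightarrow> (\<forall>b\<in>B. a b = 0)"
    and CB: "C = {lin_comb B a | a. True}"
    unfolding code_dim_def by blast
  have add: "\<And>x y. x \<in> C \<Longrightarrow> y \<in> C \<Longrightarrow> vadd x y \<in> C"
    using lin unfolding bin_linear_code_def vadd_def by blast
  have zC: "(\<lambda>i. 0) \<in> C" using lin unfolding bin_linear_code_def by blast
  let ?P = "PiE B (\<lambda>_. UNIV::bit set) :: ((nat \<Rightarrow> bit) \<Rightarrow> bit) set"
  have img: "C = lin_comb B ` ?P"
  proof -
    have eq: "lin_comb B a = lin_comb B (restrict a B)" for a
      unfolding lin_comb_def by (intro ext sum.cong) (simp_all add: restrict_apply')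
    have "lin_comb B a \<in> lin_comb B ` ?P" for a
      using eq[of a] by (intro image_eqI[where x="restrict a B"]) auto
    then show ?thesis unfolding CB by blast
  qed
  have inj: "inj_on (lin_comb B) ?P"
  proof
    fix a a' assume a: "a \<in> ?P" and a': "a' \<in> ?P" and eq: "lin_comb B a = lin_comb B a'"
    have "lin_comb B (\<lambda>b. a b + a' b) = (\<lambda>i. lin_comb B a i + lin_comb B a' i)"
      unfolding lin_comb_def by (simp only: distrib_right sum.distrib)
    also have "\<dots> = (\<lambda>i. 0)" unfolding eq by (simp only: bit_add_self)
    finally have "\<forall>b\<in>B. a b + a' b = 0" using ind by blast
    then have "\<forall>b\<in>B. a b = a' b" using bit_add_eq0 by blast
    then show "a = a'" using a a' by (auto simp: PiE_iff extensional_def intro!: ext)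
  qed
  have cardC: "card C = 128"
  proof -
    have "card C = card ?P" unfolding img by (rule card_image[OF inj])
    also have "\<dots> = 2 ^ 7" using card_PiE[OF fB, of "\<lambda>_. UNIV::bit set"] cB card_bit by simp
    finally show ?thesis by simp
  qed
  have fC: "finite C" using cardC card.infinite by fastforce
  let ?S = "{hamming_dist 94 x y | x y. x \<in> C \<and> y \<in> C \<and> x \<noteq> y}"
  have fS: "finite ?S"
  proof -
    have "?S \<subseteq> (\<lambda>(x,y). hamming_dist 94 x y) ` (C \<times> C)" by auto
    then show ?thesis using fC finite_subset by blast
  qed
  have wtge: "wt x \<ge> 46" if "x \<in> C" "x \<noteq> (\<lambda>i. 0)" for x
  proof -
    have "hamming_dist 94 x (\<lambda>i. 0) \<in> ?S" using that zC by blast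
    then have "Min ?S \<le> hamming_dist 94 x (\<lambda>i. 0)" by (rule Min_le[OF fS])
    then have "46 \<le> hamming_dist 94 x (\<lambda>i. 0)" using md unfolding min_dist_def by simp
    moreover have "vadd x (\<lambda>i. 0) = x" unfolding vadd_def by (simp only: add_0_right)
    ultimately show ?thesis using hd_wt[of x "\<lambda>i. 0"] by simp
  qed
  obtain x0 where x0C: "x0 \<in> C" and wx0: "wt x0 = 46"
  proof -
    have "C - {(\<lambda>i. 0)} \<noteq> {}"
    proof
      assume "C - {(\<lambda>i. 0)} = {}"
      then have "C \<subseteq> {(\<lambda>i. 0)}" by blast
      then have "card C \<le> card {(\<lambda>i::nat. 0::bit)}" by (rule card_mono[rotated]) simp
      then have "card C \<le> 1" by simp
      then show False using cardC by simp
    qed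
    then obtain x where "x \<in> C" "x \<noteq> (\<lambda>i. 0)" by blast
    then have "?S \<noteq> {}" using zC by blast
    then have "Min ?S \<in> ?S" using Min_in fS by blast
    then have "46 \<in> ?S" using md unfolding min_dist_def by simp
    then have "\<exists>x y. 46 = hamming_dist 94 x y \<and> x \<in> C \<and> y \<in> C" by (simp only: mem_Collect_eq) blast
    then obtain x y where h: "46 = hamming_dist 94 x y" "x \<in> C" "y \<in> C" by blast
    have w: "wt (vadd x y) = 46" using h(1) unfolding hd_wt by (rule sym)
    show ?thesis by (rule that[OF add[OF h(2) h(3)] w])
  qed
  have inter_even: "even (card {i. i < 94 \<and> x i = 1 \<and> y i = 1})" if "x \<in> C" "y \<in> C" for x y
    using so that so_even unfolding self_orthogonal_def by blast
  have wt_even: "even (wt x)" if "x \<in> C" for x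
  proof -
    have "{i. i < 94 \<and> x i = 1 \<and> x i = 1} = {i. i < 94 \<and> x i = 1}" by auto
    then show ?thesis using inter_even[OF that that] unfolding wt_def by simp
  qed
  have wt_mod: "wt (vadd x y) mod 4 = (wt x + wt y) mod 4" if xy: "x \<in> C" "y \<in> C" for x y
  proof -
    have ev: "even (card {i. i < 94 \<and> x i = 1 \<and> y i = 1})" by (rule inter_even[OF xy])
    obtain k where k: "card {i. i < 94 \<and> x i = 1 \<and> y i = 1} = 2 * k"
      using ev by blast
    have h: "wt (vadd x y) + 4*k = wt x + wt y" using wt_inter[of x y] k by simp
    show ?thesis using mod4_aux[OF h] .
  qed
  define D where "D = {x\<in>C. 4 dvd wt x}"
  have DC: "D \<subseteq> C" unfolding D_def by blast
  have fD: "finite D" using fC DC finite_subset by blast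
  have Dadd: "vadd x y \<in> D" if "x \<in> D" "y \<in> D" for x y
  proof -
    have xy: "x \<in> C" "y \<in> C" "4 dvd wt x" "4 dvd wt y" using that unfolding D_def by auto
    have "4 dvd wt (vadd x y)" using mod4_aux6[OF xy(3,4) wt_mod[OF xy(1,2)]] .
    then show ?thesis using add[OF xy(1,2)] unfolding D_def by blast
  qed
  have f1: "vadd x x0 \<in> D" if "x \<in> C - D" for x
  proof -
    have xC: "x \<in> C" and nd: "\<not> 4 dvd wt x" using that unfolding D_def by auto
    have "wt x mod 4 = 2" using mod4_aux2[OF wt_even[OF xC] nd] .
    moreover have "wt (vadd x x0) mod 4 = (wt x + 46) mod 4" using wt_mod[OF xC x0C] wx0 by simp
    ultimately have "4 dvd wt (vadd x x0)" by (rule mod4_aux4)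
    then show ?thesis using add[OF xC x0C] unfolding D_def by blast
  qed
  have f2: "vadd x x0 \<in> C - D" if "x \<in> D" for x
  proof -
    have xC: "x \<in> C" and "4 dvd wt x" using that unfolding D_def by auto
    then have "wt x mod 4 = 0" by simp
    moreover have "wt (vadd x x0) mod 4 = (wt x + 46) mod 4" using wt_mod[OF xC x0C] wx0 by simp
    ultimately have "\<not> 4 dvd wt (vadd x x0)" by (rule mod4_aux5)
    then show ?thesis using add[OF xC x0C] unfolding D_def by blast
  qed
  have "bij_betw (\<lambda>x. vadd x x0) (C - D) D"
  proof (rule bij_betw_byWitness[where f' = "\<lambda>x. vadd x x0"])
    show "\<forall>a\<in>C - D. vadd (vadd a x0) x0 = a" by (simp add: vadd_vadd)
    show "\<forall>a'\<in>D. vadd (vadd a' x0) x0 = a'" by (simp add: vadd_vadd)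
    show "(\<lambda>x. vadd x x0) ` (C - D) \<subseteq> D" using f1 by blast
    show "(\<lambda>x. vadd x x0) ` D \<subseteq> C - D" using f2 by blast
  qed
  then have "card (C - D) = card D" by (rule bij_betw_same_card)
  moreover have "card (C - D) = card C - card D" using card_Diff_subset[OF fD DC] .
  moreover have "card D \<le> card C" using card_mono[OF fC DC] .
  ultimately have cardD: "card D = 64" using cardC by linarith
  have coord: "2 * card {x\<in>D. x i = 1} \<le> card D" for i
  proof (cases "{x\<in>D. x i = 1} = {}")
    case True show ?thesis unfolding True by simp
  next
    case False
    then obtain y where y: "y \<in> D" "y i = 1" by blast
    let ?S1 = "{x\<in>D. x i = 1}" and ?S0 = "{x\<in>D. x i = 0}"
    have "inj_on (\<lambda>x. vadd x y) ?S1"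
      by (rule inj_on_inverseI[where g = "\<lambda>x. vadd x y"]) (simp add: vadd_vadd)
    moreover have "(\<lambda>x. vadd x y) ` ?S1 \<subseteq> ?S0"
    proof
      fix z assume "z \<in> (\<lambda>x. vadd x y) ` ?S1"
      then obtain x where x: "x \<in> D" "x i = 1" and z: "z = vadd x y" by blast
      have "vadd x y \<in> D" using Dadd[OF x(1) y(1)] .
      moreover have "vadd x y i = 0" unfolding vadd_def using x(2) y(2) bit_add_self[of 1] by simp
      ultimately show "z \<in> ?S0" using z by blast
    qed
    moreover have "finite ?S0" using fD by simp
    ultimately have le: "card ?S1 \<le> card ?S0" using card_inj_on_le by blast
    have "D = ?S1 \<union> ?S0" using bit_cases by auto
    moreover have "?S1 \<inter> ?S0 = {}" by auto
    ultimately have "card D = card ?S1 + card ?S0"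
      using fD card_Un_disjoint[of ?S1 ?S0] by simp
    then show ?thesis using le by linarith
  qed
  have "(\<Sum>x\<in>D. wt x) = (\<Sum>x\<in>D. \<Sum>i<94. if x i = 1 then 1 else 0)"
  proof (rule sum.cong)
    fix x
    have "wt x = card ({..<94} \<inter> {i. x i = 1})" unfolding wt_def by (rule arg_cong[where f = card]) blast
    also have "\<dots> = (\<Sum>i<94. if x i = 1 then 1 else 0)" by (simp add: sum.If_cases)
    finally show "wt x = (\<Sum>i<94. if x i = 1 then 1 else 0)" .
  qed simp
  also have "\<dots> = (\<Sum>i<94. \<Sum>x\<in>D. if x i = 1 then 1 else 0)" by (rule sum.swap)
  also have "\<dots> = (\<Sum>i<94. card {x\<in>D. x i = 1})"
    using fD by (simp add: sum.If_cases Int_def)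
  also have "\<dots> \<le> (\<Sum>i<(94::nat). 32)"
  proof (rule sum_mono)
    fix i show "card {x\<in>D. x i = 1} \<le> 32" using coord[of i] cardD by linarith
  qed
  finally have upper: "(\<Sum>x\<in>D. wt x) \<le> 3008" by simp
  have zD: "(\<lambda>i. 0) \<in> D" unfolding D_def wt_def using zC by simp
  have cD1: "card (D - {(\<lambda>i. 0)}) = 63" using card_Diff_singleton[OF zD] cardD by simp
  have s48: "(\<Sum>x\<in>D - {(\<lambda>i. 0)}. (48::nat)) = 48 * 63" unfolding sum_constant cD1 by simp
  have "(\<Sum>x\<in>D - {(\<lambda>i. 0)}. (48::nat)) \<le> (\<Sum>x\<in>D - {(\<lambda>i. 0)}. wt x)"
  proof (rule sum_mono)
    fix x assume x: "x \<in> D - {(\<lambda>i. 0)}"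
    then have "wt x \<ge> 46" "4 dvd wt x" using wtge DC unfolding D_def by auto
    then show "48 \<le> wt x" using mod4_aux3 by blast
  qed
  also have "\<dots> \<le> (\<Sum>x\<in>D. wt x)" by (rule sum_mono2) (use fD in auto)
  finally have "48 * 63 \<le> (\<Sum>x\<in>D. wt x)" unfolding s48 .
  then show False using upper by linarith
qed

end
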